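(* Fix $\kappa>0$ and $h\in(0,1)$. Let $G$ be a probability measure on $[h,1)$ and let $X_1,\dots,X_n\overset{iid}{\sim}f_G$, where $$f_G(x)=\int\frac{\Gamma(x+\kappa)}{x!\,\Gamma(\kappa)}p^\kappa(1-p)^x\,dG(p),\qquad x=0,1,\dots.$$ Let $t=-\log(1-h)/2>0$ and $A_h=\left(\frac{h}{1-\sqrt{1-h}}\right)^\kappa\in(0,\infty)$. For any $a>1$ let $K=\left\lceil\frac{a\log n+\log A_h}{t}\right\rceil$. Then for every integer $s\ge0$, $$\mathbb P_G(X_1\ge K+s)\le\frac{e^{-ts}}{n^a}.$$ *)

theory Defs
  imports "HOL-Probability.Probability"
begin

definition negbin_pmf :: "real \<Rightarrow> real \<Rightarrow> nat \<Rightarrow> real" where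
  "negbin_pmf \<kappa> p x = Gamma (real x + \<kappa>) / (fact x * Gamma \<kappa>) * p powr \<kappa> * (1 - p) ^ x"

definition f_mix :: "real \<Rightarrow> real measure \<Rightarrow> nat \<Rightarrow> real" where
  "f_mix \<kappa> G x = (\<integral>p. negbin_pmf \<kappa> p x \<partial>G)"

end

theory Submission
  imports Defs
begin

lemma gchoose_neg_pow: "((-\<kappa>) gchoose n) * (-z)^n = pochhammer \<kappa> n / fact n * (z::real)^n"
proof -
  have m: "(-1::real)^n * (-1)^n = 1" by (metis power_mult_distrib mult_minus1 minus_minus power_one)
  have "((-\<kappa>) gchoose n) * (-z)^n = ((-1)^n * pochhammer \<kappa> n / fact n) * ((-1)^n * z^n)"
    by (simp only: gbinomial_pochhammer minus_minus power_minus[of z])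
  also have "\<dots> = ((-1)^n * (-1)^n) * (pochhammer \<kappa> n / fact n * z^n)"
    by (simp only: times_divide_eq_left times_divide_eq_right mult_ac)
  finally show ?thesis using m by simp
qed

lemma nb_series:
  fixes \<kappa> z :: real
  assumes k: "\<kappa> > 0" and z: "0 \<le> z" "z < 1"
  shows "(\<lambda>x. Gamma (real x + \<kappa>) / (fact x * Gamma \<kappa>) * z ^ x) sums (1 - z) powr (-\<kappa>)"
proof -
  have "(\<lambda>n. ((-\<kappa>) gchoose n) * (-z)^n) sums (1 + (-z)) powr (-\<kappa>)"
    by (rule gen_binomial_real) (use z in auto)
  moreover have "((-\<kappa>) gchoose n) * (-z)^n = Gamma (real n + \<kappa>) / (fact n * Gamma \<kappa>) * z ^ n" for n
  proof -
    have nz: "\<kappa> \<notin> \<int>\<^sub>\<le>\<^sub>0" using k by (auto elim!: nonpos_Ints_cases)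
    have "((-\<kappa>) gchoose n) * (-z)^n = pochhammer \<kappa> n / fact n * z^n"
      by (rule gchoose_neg_pow)
    also have "\<dots> = Gamma (real n + \<kappa>) / (fact n * Gamma \<kappa>) * z ^ n"
      using nz by (simp add: pochhammer_Gamma add.commute)
    finally show ?thesis .
  qed
  ultimately show ?thesis by simp
qed

lemma tail_bound:
  fixes \<kappa> h p t :: real
  assumes k: "\<kappa> > 0" and h: "0 < h" "h < 1" and p: "h \<le> p" "p < 1"
    and t: "t = - ln (1 - h) / 2"
  shows "1 - (\<Sum>x<m. negbin_pmf \<kappa> p x) \<le> (h / (1 - sqrt (1 - h))) powr \<kappa> * exp (- t * real m)"
proof -
  define C where "C x = Gamma (real x + \<kappa>) / (fact x * Gamma \<kappa>)" for x :: nat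
  define c where "c = exp t"
  define b where "b x = negbin_pmf \<kappa> p x" for x
  have C0: "C x \<ge> 0" for x unfolding C_def using k by (intro divide_nonneg_pos mult_pos_pos Gamma_real_pos) auto
  have p0: "p > 0" using h p by auto
  have b_eq: "b x = p powr \<kappa> * (C x * (1-p)^x)" for x
    unfolding b_def C_def negbin_pmf_def by (simp add: mult_ac)
  have b0: "b x \<ge> 0" for x unfolding b_eq using C0 p by auto
  have sq: "sqrt (1-h) = exp (ln (1-h) / 2)"
    using h by (simp add: powr_half_sqrt[symmetric] powr_def)
  have sqc: "sqrt (1-h) * c = 1" unfolding sq c_def t by (simp flip: exp_add)
  have hc: "(1-h) * c = sqrt (1-h)"
  proof -
    have ss: "sqrt (1-h) * sqrt (1-h) = 1-h" using h by simp
    have "(1-h) * c = sqrt (1-h) * (sqrt (1-h) * c)" by (metis ss mult.assoc)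
    then show ?thesis using sqc by simp
  qed
  have t0: "t \<ge> 0" unfolding t using h by (simp add: ln_le_zero_iff)
  have c1: "c \<ge> 1" unfolding c_def using t0 by simp
  have sqlt: "sqrt (1-h) < 1" using h by simp
  have pc: "(1-p) * c \<le> (1-h) * c" using p c1 by (intro mult_right_mono) auto
  have z2: "0 \<le> (1-p) * c" "(1-p) * c < 1" using p c1 apply simp
    using pc hc sqlt by linarith
  have S1: "(\<lambda>x. C x * (1-p)^x) sums (1 - (1-p)) powr (-\<kappa>)"
    unfolding C_def by (rule nb_series) (use k p p0 in auto)
  have "(\<lambda>x. p powr \<kappa> * (C x * (1-p)^x)) sums (p powr \<kappa> * (1 - (1-p)) powr (-\<kappa>))"
    by (rule sums_mult[OF S1])
  moreover have "p powr \<kappa> * (1 - (1-p)) powr (-\<kappa>) = 1"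
    using p0 by (simp flip: powr_add)
  ultimately have Sb: "b sums 1" unfolding b_eq by simp
  define B where "B = p powr \<kappa> * (1 - (1-p)*c) powr (-\<kappa>)"
  have S2: "(\<lambda>x. C x * ((1-p)*c)^x) sums (1 - (1-p)*c) powr (-\<kappa>)"
    unfolding C_def by (rule nb_series) (use k z2 in auto)
  have "(\<lambda>x. p powr \<kappa> * (C x * ((1-p)*c)^x)) sums B"
    unfolding B_def by (rule sums_mult[OF S2])
  moreover have "p powr \<kappa> * (C x * ((1-p)*c)^x) = b x * c ^ x" for x
    unfolding b_eq by (simp add: power_mult_distrib mult_ac)
  ultimately have Sbc: "(\<lambda>x. b x * c ^ x) sums B" by simp
  have "1 = (\<Sum>x. b (x + m)) + (\<Sum>x<m. b x)"
    using suminf_split_initial_segment[OF sums_summable[OF Sb], of m] sums_unique[OF Sb] by simp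
  then have eq1: "1 - (\<Sum>x<m. negbin_pmf \<kappa> p x) = (\<Sum>x. b (x + m))" unfolding b_def by simp
  have em: "exp (- t * real m) * c ^ m = 1"
    unfolding c_def by (simp add: exp_of_nat_mult[symmetric] flip: exp_add)
  have sumc: "summable (\<lambda>x. b x * c ^ x)" using Sbc by (rule sums_summable)
  have sumc': "summable (\<lambda>x. b (x+m) * c ^ (x+m))"
    using summable_ignore_initial_segment[OF sumc, of m] by simp
  have le1: "b (x + m) \<le> exp (- t * real m) * (b (x+m) * c ^ (x+m))" for x
  proof -
    have "exp (- t * real m) * (b (x+m) * c ^ (x+m)) = b (x+m) * c ^ x * (exp (- t * real m) * c ^ m)"
      by (simp add: power_add mult_ac)
    also have "\<dots> = b (x+m) * c ^ x" using em by simp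
    also have "\<dots> \<ge> b (x+m)" using b0[of "x+m"] c1 by (simp add: mult_le_cancel_left1 one_le_power)
    finally show ?thesis .
  qed
  have "(\<Sum>x. b (x + m)) \<le> (\<Sum>x. exp (- t * real m) * (b (x+m) * c ^ (x+m)))"
    by (rule suminf_le[OF le1]) (use summable_ignore_initial_segment[OF sums_summable[OF Sb], of m] sumc' in \<open>auto intro: summable_mult\<close>)
  also have "\<dots> = exp (- t * real m) * (\<Sum>x. b (x+m) * c ^ (x+m))"
    using sumc' by (rule suminf_mult)
  also have "(\<Sum>x. b (x+m) * c ^ (x+m)) \<le> B"
  proof -
    have "B = (\<Sum>x. b (x+m) * c ^ (x+m)) + (\<Sum>x<m. b x * c ^ x)"
      using suminf_split_initial_segment[OF sumc, of m] sums_unique[OF Sbc] by simp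
    moreover have "(\<Sum>x<m. b x * c ^ x) \<ge> 0" using b0 c1 by (intro sum_nonneg) auto
    ultimately show ?thesis by simp
  qed
  then have "exp (- t * real m) * (\<Sum>x. b (x+m) * c ^ (x+m)) \<le> exp (- t * real m) * B"
    by (intro mult_left_mono) auto
  also have "B \<le> (h / (1 - sqrt (1 - h))) powr \<kappa>"
  proof -
    have d1: "1 - (1-p)*c > 0" using z2 by simp
    have d2: "1 - sqrt (1-h) > 0" using sqlt by simp
    have "B = (p / (1 - (1-p)*c)) powr \<kappa>"
    proof -
      have "(p / (1 - (1-p)*c)) powr \<kappa> = p powr \<kappa> / (1 - (1-p)*c) powr \<kappa>"
        using p0 d1 by (simp add: powr_divide)
      then show ?thesis unfolding B_def by (simp add: powr_minus divide_inverse)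
    qed
    also have "\<dots> \<le> (h / (1 - sqrt (1 - h))) powr \<kappa>"
    proof (rule powr_mono2)
      have "0 \<le> (p-h)*(c-1)" using p c1 by simp
      then have "p * (1 - (1-h)*c) \<le> h * (1 - (1-p)*c)" by (simp add: algebra_simps)
      then show "p / (1 - (1-p)*c) \<le> h / (1 - sqrt (1 - h))"
        using d1 d2 hc by (simp add: divide_simps)
    qed (use k p0 d1 in auto)
    finally show ?thesis .
  qed
  finally show ?thesis unfolding eq1 by (simp add: mult.commute)
qed

theorem lemmaD1:
  fixes \<kappa> h a :: real and n s :: nat and G :: "real measure"
    and M :: "'a measure" and X :: "'a \<Rightarrow> nat"
  assumes kappa_pos: "\<kappa> > 0"
    and h_range: "0 < h" "h < 1"
    and G_prob: "prob_space G" and G_sets: "sets G = sets borel"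
    and G_supp: "measure G {h..<1} = 1"
    and M_prob: "prob_space M"
    and X_meas: "X \<in> measurable M (count_space UNIV)"
    and X_dist: "\<And>x. measure M {\<omega>\<in>space M. X \<omega> = x} = f_mix \<kappa> G x"
    and n_pos: "n \<ge> 1"
    and a_gt: "a > 1"
  shows "let t = - ln (1 - h) / 2;
             A = (h / (1 - sqrt (1 - h))) powr \<kappa>;
             K = \<lceil>(a * ln (real n) + ln A) / t\<rceil>
         in measure M {\<omega>\<in>space M. int (X \<omega>) \<ge> K + int s} \<le> exp (- t * real s) / real n powr a"
proof -
  interpret G: prob_space G by (rule G_prob)
  interpret M: prob_space M by (rule M_prob)
  define t where "t = - ln (1 - h) / 2"
  define A where "A = (h / (1 - sqrt (1 - h))) powr \<kappa>"
  define K where "K = \<lceil>(a * ln (real n) + ln A) / t\<rceil>"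
  have AE: "AE p in G. p \<in> {h..<1}" by (rule G.AE_prob_1[OF G_supp])
  have meas: "(\<lambda>p. negbin_pmf \<kappa> p x) \<in> borel_measurable G" for x
  proof -
    have "(\<lambda>p. negbin_pmf \<kappa> p x) \<in> borel_measurable borel"
      unfolding negbin_pmf_def by measurable
    then show ?thesis by (subst measurable_cong_sets[OF G_sets refl])
  qed
  have bnd: "AE p in G. norm (negbin_pmf \<kappa> p x) \<le> Gamma (real x + \<kappa>) / (fact x * Gamma \<kappa>)" for x
    using AE
  proof eventually_elim
    case (elim p)
    have C0: "Gamma (real x + \<kappa>) / (fact x * Gamma \<kappa>) \<ge> 0"
      using kappa_pos by (intro divide_nonneg_pos mult_pos_pos Gamma_real_pos) auto
    have p1: "p powr \<kappa> \<le> 1" using elim h_range kappa_pos powr_mono2[of \<kappa> p 1] by auto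
    have p2: "(1-p)^x \<le> 1" using elim h_range by (intro power_le_one) auto
    have "0 \<le> p powr \<kappa> * (1-p)^x" using elim by simp
    moreover have "p powr \<kappa> * (1-p)^x \<le> 1" using p1 p2 elim
      by (metis mult_le_one powr_ge_zero zero_le_power atLeastLessThan_iff diff_ge_0_iff_ge less_eq_real_def)
    moreover have "negbin_pmf \<kappa> p x = Gamma (real x + \<kappa>) / (fact x * Gamma \<kappa>) * (p powr \<kappa> * (1-p)^x)"
      unfolding negbin_pmf_def by (simp add: mult.assoc)
    ultimately show ?case using C0
      by (metis abs_of_nonneg mult_left_le mult_nonneg_nonneg real_norm_def)
  qed
  have intg: "integrable G (\<lambda>p. negbin_pmf \<kappa> p x)" for x
    by (rule G.integrable_const_bound[OF bnd meas])
  have msets: "{\<omega>\<in>space M. P (X \<omega>)} \<in> sets M" for P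
  proof -
    have "X -` {x. P x} \<inter> space M \<in> sets M" using measurable_sets[OF X_meas, of "{x. P x}"] by simp
    moreover have "X -` {x. P x} \<inter> space M = {\<omega>\<in>space M. P (X \<omega>)}" by auto
    ultimately show ?thesis by simp
  qed
  have lt: "measure M {\<omega>\<in>space M. X \<omega> < m} = (\<Sum>x<m. f_mix \<kappa> G x)" for m
  proof (induction m)
    case 0 then show ?case by simp
  next
    case (Suc m)
    have "{\<omega>\<in>space M. X \<omega> < Suc m} = {\<omega>\<in>space M. X \<omega> < m} \<union> {\<omega>\<in>space M. X \<omega> = m}"
      by auto
    then have "measure M {\<omega>\<in>space M. X \<omega> < Suc m}
        = measure M {\<omega>\<in>space M. X \<omega> < m} + measure M {\<omega>\<in>space M. X \<omega> = m}"
      using M.finite_measure_Union[OF msets[of "\<lambda>y. y < m"] msets[of "\<lambda>y. y = m"]] by auto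
    then show ?case using Suc X_dist by simp
  qed
  have tailM: "measure M {\<omega>\<in>space M. X \<omega> \<ge> m} \<le> A * exp (- t * real m)" for m
  proof -
    have "{\<omega>\<in>space M. X \<omega> \<ge> m} = space M - {\<omega>\<in>space M. X \<omega> < m}" by auto
    then have "measure M {\<omega>\<in>space M. X \<omega> \<ge> m} = 1 - (\<Sum>x<m. f_mix \<kappa> G x)"
      using M.prob_compl[OF msets[of "\<lambda>y. y < m"]] lt[of m] by simp
    also have "(\<Sum>x<m. f_mix \<kappa> G x) = (\<integral>p. (\<Sum>x<m. negbin_pmf \<kappa> p x) \<partial>G)"
      unfolding f_mix_def using intg by simp
    also have "1 - (\<integral>p. (\<Sum>x<m. negbin_pmf \<kappa> p x) \<partial>G) = (\<integral>p. 1 - (\<Sum>x<m. negbin_pmf \<kappa> p x) \<partial>G)"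
      using intg by (simp add: G.prob_space)
    also have "\<dots> \<le> (\<integral>p. A * exp (- t * real m) \<partial>G)"
    proof (rule integral_mono_AE)
      show "integrable G (\<lambda>p. 1 - (\<Sum>x<m. negbin_pmf \<kappa> p x))" using intg by auto
      show "integrable G (\<lambda>p. A * exp (- t * real m))" by simp
      show "AE p in G. 1 - (\<Sum>x<m. negbin_pmf \<kappa> p x) \<le> A * exp (- t * real m)"
        using AE by eventually_elim (use tail_bound[OF kappa_pos h_range _ _ t_def] A_def in auto)
    qed
    also have "\<dots> = A * exp (- t * real m)" by (simp add: G.prob_space)
    finally show ?thesis .
  qed
  have t0: "t > 0" unfolding t_def using h_range by simp
  have A1: "A \<ge> 1"
  proof -
    have sq: "sqrt (1-h) < 1" "0 \<le> sqrt (1-h)" using h_range by auto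
    have ss: "sqrt (1-h) * sqrt (1-h) = 1-h" using h_range by simp
    have "h = (1 - sqrt (1-h)) * (1 + sqrt (1-h))" using ss by (simp add: algebra_simps)
    then have "h / (1 - sqrt (1 - h)) = 1 + sqrt (1-h)" using sq by (simp add: field_simps)
    then have "h / (1 - sqrt (1 - h)) \<ge> 1" using sq by simp
    then show ?thesis unfolding A_def using kappa_pos by (simp add: ge_one_powr_ge_zero)
  qed
  have gen: "measure M {\<omega>\<in>space M. int (X \<omega>) \<ge> k} \<le> A * exp (- t * k)" for k :: int
  proof -
    have "{\<omega>\<in>space M. int (X \<omega>) \<ge> k} = {\<omega>\<in>space M. X \<omega> \<ge> nat k}" by auto
    then have "measure M {\<omega>\<in>space M. int (X \<omega>) \<ge> k} \<le> A * exp (- t * real (nat k))"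
      using tailM by simp
    also have "\<dots> \<le> A * exp (- t * k)" using A1 t0 by (intro mult_left_mono) auto
    finally show ?thesis .
  qed
  have "measure M {\<omega>\<in>space M. int (X \<omega>) \<ge> K + int s} \<le> A * exp (- t * (K + int s))"
    using gen[of "K + int s"] by simp
  also have "\<dots> = (A * exp (- t * K)) * exp (- t * real s)"
    by (simp add: algebra_simps flip: exp_add)
  also have "A * exp (- t * K) \<le> 1 / real n powr a"
  proof -
    have "(a * ln (real n) + ln A) / t \<le> K" unfolding K_def by simp
    then have "a * ln (real n) + ln A \<le> t * K" using t0 by (simp add: field_simps)
    then have "exp (- t * K) \<le> exp (- (a * ln (real n)) - ln A)" by simp
    also have "\<dots> = 1 / (real n powr a * A)"
      using A1 n_pos by (simp add: exp_diff exp_minus powr_def field_simps)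
    finally show ?thesis using A1 n_pos by (simp add: field_simps)
  qed
  then have "(A * exp (- t * K)) * exp (- t * real s) \<le> (1 / real n powr a) * exp (- t * real s)"
    by (intro mult_right_mono) auto
  finally show ?thesis unfolding Let_def t_def[symmetric] A_def[symmetric] K_def[symmetric] by simp
qed

end
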